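(* Let $G=(V,E)$ be an undirected graph with two distinct vertices $s,t\in V$ and let $k$ be an integer. Let $G''$ be the graph obtained from $G$ by adding two new vertices $s',t'$ and the two edges $\{s',s\}$ and $\{t,t'\}$, and let $G'$ be the third power of $G''$. Then there is a set $S\subseteq V\setminus\{s,t\}$ such that $G-S$ has no $s$-$t$ path and $|N_G[S]|\le k$ if and only if there is a set $S'\subseteq V(G')\setminus\{s',t'\}$ such that $G'-S'$ has no $s'$-$t'$ path and $|S'|\le k$.
   Context: For $x\in\mathbb{N}$, the $x$-th power of a graph $H=(V,E)$ is the graph on vertex set $V$ in which two distinct vertices $u,v$ are adjacent if and only if their distance in $H$ is at most $x$. $N_G[S]=S\cup\bigcup_{v\in S}N_G(v)$ denotes the closed neighborhood of $S$ in $G$. *)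

theory Defs
  imports Main
begin

definition simple_graph :: "'a set \<Rightarrow> 'a set set \<Rightarrow> bool" where
  "simple_graph V E \<longleftrightarrow> (\<forall>e\<in>E. \<exists>u v. e = {u, v} \<and> u \<in> V \<and> v \<in> V \<and> u \<noteq> v)"

definition adj :: "'a set set \<Rightarrow> 'a \<Rightarrow> 'a \<Rightarrow> bool" where
  "adj E u v \<longleftrightarrow> {u, v} \<in> E"

definition has_path :: "'a set \<Rightarrow> 'a set set \<Rightarrow> 'a \<Rightarrow> 'a \<Rightarrow> bool" where
  "has_path V E u v \<longleftrightarrow> u \<in> V \<and> v \<in> V \<and> (\<lambda>x y. x \<in> V \<and> y \<in> V \<and> adj E x y)\<^sup>*\<^sup>* u v"

definition del_vertices_V :: "'a set \<Rightarrow> 'a set \<Rightarrow> 'a set" where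
  "del_vertices_V V S = V - S"

definition del_vertices_E :: "'a set set \<Rightarrow> 'a set \<Rightarrow> 'a set set" where
  "del_vertices_E E S = {e \<in> E. e \<inter> S = {}}"

definition power_edges :: "nat \<Rightarrow> 'a set \<Rightarrow> 'a set set \<Rightarrow> 'a set set" where
  "power_edges x V E = {{u, v} | u v. u \<in> V \<and> v \<in> V \<and> u \<noteq> v \<and>
      (\<exists>n\<le>x. ((\<lambda>a b. a \<in> V \<and> b \<in> V \<and> adj E a b) ^^ n) u v)}"

definition closed_nbhd :: "'a set set \<Rightarrow> 'a set \<Rightarrow> 'a set" where
  "closed_nbhd E S = S \<union> {v. \<exists>u\<in>S. adj E u v}"

end

theory Submission
  imports Defs
begin

lemma walk3:
  assumes "a = b \<or> R a b" "R b c" "c = d \<or> R c d"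
  shows "\<exists>n\<le>3. (R^^n) a d"
proof -
  have c1: "(R^^Suc 0) b c" using relpowp_Suc_I2[of R b c 0 c, OF assms(2) relpowp_0_I] .
  have "\<exists>n\<le>2. (R^^n) a c"
  proof (cases "a = b")
    case True then show ?thesis using c1 by (intro exI[of _ "Suc 0"]) auto
  next
    case False then have "R a b" using assms(1) by blast
    then have "(R^^Suc (Suc 0)) a c" by (rule relpowp_Suc_I2[OF _ c1])
    then show ?thesis by (intro exI[of _ "Suc (Suc 0)"]) auto
  qed
  then obtain n where n: "n \<le> 2" "(R^^n) a c" by blast
  show ?thesis
  proof (cases "c = d")
    case True then show ?thesis using n by (intro exI[of _ n]) auto
  next
    case False then have "R c d" using assms(3) by blast
    then have "(R^^Suc n) a d" by (rule relpowp_Suc_I[OF n(2)])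
    then show ?thesis using n(1) by (intro exI[of _ "Suc n"]) auto
  qed
qed

lemma pow_cases:
  assumes "n \<le> (3::nat)" "(R^^n) u v"
  shows "u = v \<or> R u v \<or> (\<exists>w. R u w \<and> R w v) \<or> (\<exists>w1 w2. R u w1 \<and> R w1 w2 \<and> R w2 v)"
proof -
  have "n = 0 \<or> n = 1 \<or> n = 2 \<or> n = 3" using assms(1) by arith
  then show ?thesis using assms(2)
    by (auto simp: eval_nat_numeral relcompp_apply)
qed

lemma rtr_mono_map:
  assumes "\<And>a b. A a b \<Longrightarrow> B\<^sup>*\<^sup>* (f a) (f b)" "A\<^sup>*\<^sup>* x y"
  shows "B\<^sup>*\<^sup>* (f x) (f y)"
  using assms(2)
proof (induction rule: rtranclp_induct)
  case base then show ?case by simp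
next
  case (step y z) then show ?case using assms(1) by (meson rtranclp_trans)
qed

theorem lemma1:
  fixes V :: "'a set" and E :: "'a set set" and s t s' t' :: 'a and k :: int
  assumes "finite V" and "simple_graph V E"
    and "s \<in> V" and "t \<in> V" and "s \<noteq> t"
    and "s' \<notin> V" and "t' \<notin> V" and "s' \<noteq> t'"
  shows "(\<exists>S. S \<subseteq> V - {s, t} \<and>
            \<not> has_path (del_vertices_V V S) (del_vertices_E E S) s t \<and>
            int (card (closed_nbhd E S)) \<le> k)
     \<longleftrightarrow>
         (\<exists>S'. S' \<subseteq> (V \<union> {s', t'}) - {s', t'} \<and>
            \<not> has_path (del_vertices_V (V \<union> {s', t'}) S')
                 (del_vertices_E (power_edges 3 (V \<union> {s', t'}) (E \<union> {{s', s}, {t, t'}})) S') s' t' \<and>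
            int (card S') \<le> k)"
proof -
  define V2 where "V2 = V \<union> {s', t'}"
  define E2 where "E2 = E \<union> {{s', s}, {t, t'}}"
  define R where "R = (\<lambda>a b. a \<in> V2 \<and> b \<in> V2 \<and> adj E2 a b)"
  define P where "P = power_edges 3 V2 E2"
  have E_V: "a \<in> V \<and> b \<in> V \<and> a \<noteq> b" if ab: "{a,b} \<in> E" for a b
  proof -
    obtain u v where "{a,b} = {u,v}" "u \<in> V" "v \<in> V" "u \<noteq> v"
      using bspec[OF assms(2)[unfolded simple_graph_def] ab] by blast
    then show ?thesis by (auto simp: doubleton_eq_iff)
  qed
  have Rsym: "R a b \<Longrightarrow> R b a" for a b by (auto simp: R_def adj_def insert_commute)
  have powE: "{a,d} \<in> P" if "a \<in> V2" "d \<in> V2" "a \<noteq> d" "\<exists>n\<le>3. (R^^n) a d" for a d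
    using that unfolding P_def power_edges_def R_def by blast
  have Pwalk: "\<exists>u v n. {x,y} = {u,v} \<and> n \<le> 3 \<and> (R^^n) u v" if "{x,y} \<in> P" for x y
    using that unfolding P_def power_edges_def R_def by blast
  have fin2: "finite V2" using assms(1) by (simp add: V2_def)
  define Q where "Q = (\<lambda>S'. \<lambda>x y. x \<in> del_vertices_V V2 S' \<and> y \<in> del_vertices_V V2 S' \<and>
                            adj (del_vertices_E P S') x y)"
  show ?thesis
  proof
    assume "\<exists>S. S \<subseteq> V - {s, t} \<and>
            \<not> has_path (del_vertices_V V S) (del_vertices_E E S) s t \<and>
            int (card (closed_nbhd E S)) \<le> k"
    then obtain S where SV: "S \<subseteq> V - {s, t}"
      and nop: "\<not> has_path (del_vertices_V V S) (del_vertices_E E S) s t"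
      and card: "int (card (closed_nbhd E S)) \<le> k" by blast
    define S' where "S' = closed_nbhd E S"
    have S'V: "S' \<subseteq> V" using SV E_V unfolding S'_def closed_nbhd_def adj_def by blast
    have SS': "S \<subseteq> S'" unfolding S'_def closed_nbhd_def by blast
    define RS where "RS = (\<lambda>a b. a \<in> V2 - S \<and> b \<in> V2 - S \<and> adj E2 a b)"
    define T where "T = (\<lambda>x y. x \<in> del_vertices_V V S \<and> y \<in> del_vertices_V V S \<and>
                            adj (del_vertices_E E S) x y)"
    have Nb: "z \<in> S'" if "w \<in> S" "{w,z} \<in> E2" for w z
    proof -
      have "w \<in> V" "w \<noteq> s" "w \<noteq> t" using that SV by auto
      then have "w \<noteq> s'" "w \<noteq> t'" using assms by auto
      then have "{w,z} \<in> E" using that \<open>w \<noteq> s\<close> \<open>w \<noteq> t\<close> by (auto simp: E2_def doubleton_eq_iff)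
      then show ?thesis using that unfolding S'_def closed_nbhd_def adj_def by blast
    qed
    have RS_of: "RS a b" if "R a b" "a \<notin> S" "b \<notin> S" for a b
      using that by (auto simp: RS_def R_def)
    have walkS: "RS\<^sup>*\<^sup>* u v" if "n \<le> 3" "(R^^n) u v" "u \<notin> S'" "v \<notin> S'" for n u v
    proof -
      have uS: "u \<notin> S" "v \<notin> S" using that SS' by auto
      have Ns: "b \<notin> S" if "R a b" "a \<notin> S'" for a b
        using that Nb Rsym unfolding R_def adj_def by blast
      have Ns2: "a \<notin> S" if "R a b" "b \<notin> S'" for a b
        using that Nb unfolding R_def adj_def by blast
      from pow_cases[OF that(1,2)] show ?thesis
      proof (elim disjE exE conjE)
        assume "u = v" then show ?thesis by simp
      next
        assume "R u v" then show ?thesis using RS_of uS by blast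
      next
        fix w assume "R u w" "R w v"
        then have "w \<notin> S" using Ns2 that(4) by blast
        then have r: "RS u w" "RS w v" using RS_of uS \<open>R u w\<close> \<open>R w v\<close> by auto
        have "RS\<^sup>*\<^sup>* w v" using r(2) by blast
        then show ?thesis by (rule converse_rtranclp_into_rtranclp[of RS, OF r(1)])
      next
        fix w1 w2 assume a: "R u w1" "R w1 w2" "R w2 v"
        then have "w1 \<notin> S" using Ns that(3) by blast
        moreover have "w2 \<notin> S" using a Ns2 that(4) by blast
        ultimately have r: "RS u w1" "RS w1 w2" "RS w2 v" using RS_of uS a by auto
        have "RS\<^sup>*\<^sup>* w2 v" using r(3) by blast
        then have "RS\<^sup>*\<^sup>* w1 v" by (rule converse_rtranclp_into_rtranclp[of RS, OF r(2)])
        then show ?thesis by (rule converse_rtranclp_into_rtranclp[of RS, OF r(1)])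
      qed
    qed
    have RSsym: "symp RS" unfolding symp_def RS_def adj_def by (auto simp: insert_commute)
    have QRS: "RS\<^sup>*\<^sup>* s' y" if "(Q S')\<^sup>*\<^sup>* s' y" for y
      using that
    proof (induction rule: rtranclp_induct)
      case base then show ?case by simp
    next
      case (step x y)
      then have xy: "{x,y} \<in> P" "x \<notin> S'" "y \<notin> S'"
        unfolding Q_def adj_def del_vertices_E_def del_vertices_V_def by auto
      obtain u v n where uv: "{x,y} = {u,v}" "n \<le> 3" "(R^^n) u v" using Pwalk[OF xy(1)] by blast
      have "RS\<^sup>*\<^sup>* x y"
      proof (cases "x = u \<and> y = v")
        case True then show ?thesis using walkS uv xy by blast
      next
        case False
        then have "x = v" "y = u" using uv(1) by (auto simp: doubleton_eq_iff)
        then have "RS\<^sup>*\<^sup>* y x" using walkS uv xy by blast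
        then show ?thesis using symp_rtranclp[OF RSsym] by (meson sympD)
      qed
      then show ?case using step.IH by (meson rtranclp_trans)
    qed
    define f where "f = (\<lambda>x. if x = s' then s else if x = t' then t else x)"
    have fT: "T\<^sup>*\<^sup>* (f a) (f b)" if "RS a b" for a b
    proof -
      have ab: "a \<notin> S" "b \<notin> S" "{a,b} \<in> E2" using that unfolding RS_def adj_def by auto
      show ?thesis
      proof (cases "{a,b} \<in> E")
        case True
        then have "a \<in> V" "b \<in> V" using E_V by auto
        then have "f a = a" "f b = b" using assms unfolding f_def by auto
        moreover have "T a b" using True ab \<open>a \<in> V\<close> \<open>b \<in> V\<close>
          unfolding T_def del_vertices_V_def del_vertices_E_def adj_def by auto
        ultimately show ?thesis by simp
      next
        case False
        then have "{a,b} = {s',s} \<or> {a,b} = {t,t'}" using ab unfolding E2_def by auto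
        then have "f a = f b" using assms unfolding f_def by (auto simp: doubleton_eq_iff)
        then show ?thesis by simp
      qed
    qed
    have nopath: "\<not> has_path (del_vertices_V V2 S') (del_vertices_E P S') s' t'"
    proof
      assume "has_path (del_vertices_V V2 S') (del_vertices_E P S') s' t'"
      then have "(Q S')\<^sup>*\<^sup>* s' t'" unfolding has_path_def Q_def by simp
      then have "RS\<^sup>*\<^sup>* s' t'" by (rule QRS)
      then have "T\<^sup>*\<^sup>* (f s') (f t')" using rtr_mono_map[of RS T f] fT by blast
      moreover have "f s' = s" "f t' = t" using assms unfolding f_def by auto
      ultimately have "T\<^sup>*\<^sup>* s t" by simp
      moreover have "s \<in> del_vertices_V V S" "t \<in> del_vertices_V V S"
        using SV assms unfolding del_vertices_V_def by auto
      ultimately show False using nop unfolding has_path_def T_def by blast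
    qed
    show "\<exists>S'. S' \<subseteq> (V \<union> {s', t'}) - {s', t'} \<and>
            \<not> has_path (del_vertices_V (V \<union> {s', t'}) S')
                 (del_vertices_E (power_edges 3 (V \<union> {s', t'}) (E \<union> {{s', s}, {t, t'}})) S') s' t' \<and>
            int (card S') \<le> k"
      using nopath card S'V assms(6,7) unfolding V2_def E2_def P_def S'_def
      by (intro exI[of _ "closed_nbhd E S"]) auto
  next
    assume "\<exists>S'. S' \<subseteq> (V \<union> {s', t'}) - {s', t'} \<and>
            \<not> has_path (del_vertices_V (V \<union> {s', t'}) S')
                 (del_vertices_E (power_edges 3 (V \<union> {s', t'}) (E \<union> {{s', s}, {t, t'}})) S') s' t' \<and>
            int (card S') \<le> k"
    then obtain S' where S'V: "S' \<subseteq> V2 - {s', t'}"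
      and nop: "\<not> has_path (del_vertices_V V2 S') (del_vertices_E P S') s' t'"
      and card: "int (card S') \<le> k" unfolding V2_def P_def E2_def by blast
    define S where "S = {v \<in> V - {s,t}. v \<in> S' \<and> (\<forall>w. adj E v w \<longrightarrow> w \<in> S')}"
    have SV: "S \<subseteq> V - {s,t}" unfolding S_def by blast
    have NS: "closed_nbhd E S \<subseteq> S'" unfolding S_def closed_nbhd_def by blast
    have finS': "finite S'" using S'V fin2 finite_subset by blast
    have cardS: "int (card (closed_nbhd E S)) \<le> k"
      using card_mono[OF finS' NS] card by linarith
    define T where "T = (\<lambda>x y. x \<in> del_vertices_V V S \<and> y \<in> del_vertices_V V S \<and>
                            adj (del_vertices_E E S) x y)"
    have ss: "s' \<notin> S'" "t' \<notin> S'" using S'V by auto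
    have pick: "\<exists>q. q \<in> V2 - S' \<and> (w = q \<or> R w q)" if "w \<in> V" "w \<notin> S" for w
    proof (cases "w = s \<or> w = t")
      case True
      then show ?thesis
      proof
        assume "w = s" then show ?thesis using ss assms
          by (intro exI[of _ s']) (auto simp: R_def V2_def E2_def adj_def)
      next
        assume "w = t" then show ?thesis using ss assms
          by (intro exI[of _ t']) (auto simp: R_def V2_def E2_def adj_def)
      qed
    next
      case False
      then have "w \<notin> S' \<or> (\<exists>u. adj E w u \<and> u \<notin> S')" using that unfolding S_def by blast
      then show ?thesis
      proof
        assume "w \<notin> S'" then show ?thesis using that by (auto simp: V2_def)
      next
        assume "\<exists>u. adj E w u \<and> u \<notin> S'"
        then obtain u where u: "adj E w u" "u \<notin> S'" by blast
        then have "u \<in> V" using E_V unfolding adj_def by blast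
        then show ?thesis using u that
          by (intro exI[of _ u]) (auto simp: R_def V2_def E2_def adj_def)
      qed
    qed
    have stepQ: "(Q S')\<^sup>*\<^sup>* a d" if "a \<in> V2 - S'" "d \<in> V2 - S'"
      "a = b \<or> R a b" "R b c" "c = d \<or> R c d" for a b c d
    proof (cases "a = d")
      case True then show ?thesis by simp
    next
      case False
      have "{a,d} \<in> P" using powE walk3[OF that(3,4,5)] that(1,2) False by blast
      then have "Q S' a d" using that(1,2)
        unfolding Q_def del_vertices_V_def del_vertices_E_def adj_def by auto
      then show ?thesis by simp
    qed
    have inv: "\<exists>q. q \<in> V2 - S' \<and> (v = q \<or> R v q) \<and> (Q S')\<^sup>*\<^sup>* s' q" if "T\<^sup>*\<^sup>* s v" for v
      using that
    proof (induction rule: rtranclp_induct)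
      case base
      show ?case using ss assms
        by (intro exI[of _ s']) (auto simp: R_def V2_def E2_def adj_def)
    next
      case (step v w)
      then obtain q where q: "q \<in> V2 - S'" "v = q \<or> R v q" "(Q S')\<^sup>*\<^sup>* s' q" by blast
      have vw: "v \<in> V" "w \<in> V" "w \<notin> S" "{v,w} \<in> E"
        using step(2) unfolding T_def del_vertices_V_def del_vertices_E_def adj_def by auto
      have Rvw: "R v w" using vw unfolding R_def V2_def E2_def adj_def by auto
      obtain q' where q': "q' \<in> V2 - S'" "w = q' \<or> R w q'" using pick vw by blast
      have "q = v \<or> R q v" using q(2) Rsym by blast
      then have "(Q S')\<^sup>*\<^sup>* q q'" using stepQ q(1) q'(1) Rvw q'(2) by blast
      then have "(Q S')\<^sup>*\<^sup>* s' q'" using q(3) by (meson rtranclp_trans)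
      then show ?case using q'(1,2) by blast
    qed
    have nopath: "\<not> has_path (del_vertices_V V S) (del_vertices_E E S) s t"
    proof
      assume "has_path (del_vertices_V V S) (del_vertices_E E S) s t"
      then have "T\<^sup>*\<^sup>* s t" unfolding has_path_def T_def by simp
      then obtain q where q: "q \<in> V2 - S'" "t = q \<or> R t q" "(Q S')\<^sup>*\<^sup>* s' q" using inv by blast
      have Rtt: "R t t'" using assms unfolding R_def V2_def E2_def adj_def by auto
      have t'in: "t' \<in> V2 - S'" using ss by (simp add: V2_def)
      have "q = t \<or> R q t" using q(2) Rsym by blast
      then have "(Q S')\<^sup>*\<^sup>* q t'" using stepQ[OF q(1) t'in _ Rtt] by blast
      then have "(Q S')\<^sup>*\<^sup>* s' t'" using q(3) by (meson rtranclp_trans)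
      moreover have "s' \<in> del_vertices_V V2 S'" "t' \<in> del_vertices_V V2 S'"
        using ss unfolding del_vertices_V_def V2_def by auto
      ultimately show False using nop unfolding has_path_def Q_def by blast
    qed
    show "\<exists>S. S \<subseteq> V - {s, t} \<and>
            \<not> has_path (del_vertices_V V S) (del_vertices_E E S) s t \<and>
            int (card (closed_nbhd E S)) \<le> k"
      using SV nopath cardS by blast
  qed
qed

end
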